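(* Let $0<q\le1\le p\le2$, let $A\in\mathbb{R}^{m\times n}$, let $\bar{x}\in\mathbb{R}^n$ have exactly $S\ge1$ nonzero groups, let $\mathcal{S}:=\{i:\bar{x}_{\mathcal{G}_i}\ne0\}$, and set $b:=A\bar{x}$. Suppose the $(p,q)$-GREC$(S,S)$ holds. Let $K$ be the smallest integer with $2^{K-1}q\ge1$. Then for every $x^*\in{\rm lev}_F(\bar{x}):=\{x:\|Ax-b\|_2^2+\lambda\|x\|_{p,q}^q\le\lambda\|\bar{x}\|_{p,q}^q\}$ (where $\lambda>0$), $$\|Ax^*-A\bar{x}\|_2^2+\lambda\|x^*_{\mathcal{G}_{\mathcal{S}^c}}\|_{p,q}^q\le\lambda^{\frac{2}{2-q}}S^{(1-2^{-K})\frac{2}{2-q}}\big/\phi_{p,q}^{\frac{2q}{2-q}}(S,S),$$ and, with $\mathcal{N}_*:=\mathcal{S}\cup\mathcal{S}(x^*;S)$, $$\|x^*_{\mathcal{G}_{\mathcal{N}_*}}-\bar{x}_{\mathcal{G}_{\mathcal{N}_*}}\|_{p,2}^2\le\lambda^{\frac{2}{2-q}}S^{(1-2^{-K})\frac{2}{2-q}}\big/\phi_{p,q}^{\frac{4}{2-q}}(S,S).$$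
   Context: Group structure: $\{1,\dots,n\}$ is partitioned into disjoint nonempty index sets $\mathcal{G}_1,\dots,\mathcal{G}_r$; $x_{\mathcal{G}_i}$ is the subvector indexed by $\mathcal{G}_i$. For $\mathcal{J}\subseteq\{1,\dots,r\}$, $\|x_{\mathcal{G}_{\mathcal{J}}}\|_{p,q}:=(\sum_{i\in\mathcal{J}}\|x_{\mathcal{G}_i}\|_p^q)^{1/q}$ and $\|x\|_{p,q}:=\|x_{\mathcal{G}_{\{1,\dots,r\}}}\|_{p,q}$; $x_{\mathcal{G}_{\mathcal{J}}}$ denotes the subvector indexed by $\bigcup_{i\in\mathcal{J}}\mathcal{G}_i$. For $\mathcal{J}\subseteq\{1,\dots,r\}$ and integer $N$, $\mathcal{J}(x;N)$ is the set of the $N$ indices $i\in\mathcal{J}^c$ with the largest $\|x_{\mathcal{G}_i}\|_p$ (ties broken arbitrarily; all of $\mathcal{J}^c$ if it has fewer than $N$ elements). Group restricted eigenvalue: $\phi_{p,q}(S,N):=\inf\{\|Ax\|_2/\|x_{\mathcal{G}_{\mathcal{N}}}\|_{p,2}: x\ne0,\ |\mathcal{J}|\le S,\ \|x_{\mathcal{G}_{\mathcal{J}^c}}\|_{p,q}\le\|x_{\mathcal{G}_{\mathcal{J}}}\|_{p,q},\ \mathcal{N}=\mathcal{J}(x;N)\cup\mathcal{J}\}$; the $(p,q)$-GREC$(S,N)$ holds if $\phi_{p,q}(S,N)>0$. *)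

theory Defs
  imports "HOL-Analysis.Analysis"
begin

definition group_partition :: "nat \<Rightarrow> (nat \<Rightarrow> 'n set) \<Rightarrow> bool" where
  "group_partition r G \<longleftrightarrow>
     (\<forall>i\<in>{1..r}. G i \<noteq> {}) \<and>
     (\<forall>i\<in>{1..r}. \<forall>j\<in>{1..r}. i \<noteq> j \<longrightarrow> G i \<inter> G j = {}) \<and>
     (\<Union>i\<in>{1..r}. G i) = UNIV"

definition gnorm :: "real \<Rightarrow> 'n::finite set \<Rightarrow> real ^ 'n \<Rightarrow> real" where
  "gnorm p I x = (\<Sum>j\<in>I. \<bar>x $ j\<bar> powr p) powr (1 / p)"

definition mixnorm :: "real \<Rightarrow> real \<Rightarrow> (nat \<Rightarrow> 'n::finite set) \<Rightarrow> real ^ 'n \<Rightarrow> nat set \<Rightarrow> real" where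
  "mixnorm p q G x J = (\<Sum>i\<in>J. gnorm p (G i) x powr q) powr (1 / q)"

text \<open>T is an admissible choice of J(x;N): the N indices of J^c (complement in 1..r)
  with largest group p-norm (ties broken arbitrarily; all of J^c if it has fewer than N elements).\<close>
definition is_topN :: "real \<Rightarrow> (nat \<Rightarrow> 'n::finite set) \<Rightarrow> nat \<Rightarrow> real ^ 'n \<Rightarrow> nat set \<Rightarrow> nat \<Rightarrow> nat set \<Rightarrow> bool" where
  "is_topN p G r x J N T \<longleftrightarrow>
     T \<subseteq> {1..r} - J \<and> card T = min N (card ({1..r} - J)) \<and>
     (\<forall>i\<in>T. \<forall>j\<in>({1..r} - J) - T. gnorm p (G j) x \<le> gnorm p (G i) x)"

definition grec_phi :: "real \<Rightarrow> real \<Rightarrow> (nat \<Rightarrow> 'n::finite set) \<Rightarrow> nat \<Rightarrow> real ^ 'n ^ 'm \<Rightarrow> nat \<Rightarrow> nat \<Rightarrow> real" where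
  "grec_phi p q G r A S N = Inf {norm (A *v x) / mixnorm p 2 G x (T \<union> J) | x J T.
      x \<noteq> 0 \<and> J \<subseteq> {1..r} \<and> card J \<le> S \<and>
      mixnorm p q G x ({1..r} - J) \<le> mixnorm p q G x J \<and> is_topN p G r x J N T}"

end

theory Submission
  imports Defs
begin

lemma subadd_powr:
  fixes a b q :: real
  assumes "0 < q" "q \<le> 1" "0 \<le> a" "0 \<le> b"
  shows "(a + b) powr q \<le> a powr q + b powr q"
proof (cases "a + b = 0")
  case True
  then have "a = 0" "b = 0" using assms by auto
  then show ?thesis by simp
next
  case False
  define s where "s = a + b"
  have s: "s > 0" using False assms s_def by auto
  have "a / s \<le> (a / s) powr q"
    using powr_mono'[of q 1 "a/s"] assms s s_def by (simp add: divide_le_eq_1)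
  also have "\<dots> = a powr q / s powr q" using assms s by (simp add: powr_divide)
  finally have 1: "a / s \<le> a powr q / s powr q" .
  have "b / s \<le> (b / s) powr q"
    using powr_mono'[of q 1 "b/s"] assms s s_def by (simp add: divide_le_eq_1)
  also have "\<dots> = b powr q / s powr q" using assms s by (simp add: powr_divide)
  finally have 2: "b / s \<le> b powr q / s powr q" .
  have "1 = a / s + b / s" using s s_def by (simp add: add_divide_distrib[symmetric])
  also have "\<dots> \<le> (a powr q + b powr q) / s powr q" using 1 2 by (simp add: add_divide_distrib)
  finally have "s powr q \<le> a powr q + b powr q" using s by (simp add: le_divide_eq)
  then show ?thesis using s_def by simp
qed

lemma pw_convex:
  fixes p t x y :: real
  assumes "1 \<le> p" "0 \<le> t" "t \<le> 1" "0 \<le> x" "0 \<le> y"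
  shows "((1 - t) * x + t * y) powr p \<le> (1 - t) * x powr p + t * y powr p"
proof -
  have tp: "u powr p \<le> u" if "0 \<le> u" "u \<le> 1" for u :: real
    using powr_mono'[of 1 p u] that assms by simp
  show ?thesis
  proof (cases "x = 0")
    case True
    then have "((1 - t) * x + t * y) powr p = t powr p * y powr p"
      using assms by (simp add: powr_mult)
    also have "\<dots> \<le> t * y powr p" using tp[of t] assms by (simp add: mult_right_mono)
    finally show ?thesis using True assms by simp
  next
    case xne: False
    show ?thesis
    proof (cases "y = 0")
      case True
      then have "((1 - t) * x + t * y) powr p = (1 - t) powr p * x powr p"
        using assms by (simp add: powr_mult)
      also have "\<dots> \<le> (1 - t) * x powr p" using tp[of "1-t"] assms by (simp add: mult_right_mono)
      finally show ?thesis using True assms by simp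
    next
      case False
      then show ?thesis
        using convex_onD[OF powr_convex[OF assms(1)], of t x y] assms xne by simp
    qed
  qed
qed

lemma minkowski_fin:
  fixes a b :: "'i \<Rightarrow> real" and p :: real
  assumes "1 \<le> p" "finite I"
  shows "(\<Sum>j\<in>I. \<bar>a j + b j\<bar> powr p) powr (1/p)
    \<le> (\<Sum>j\<in>I. \<bar>a j\<bar> powr p) powr (1/p) + (\<Sum>j\<in>I. \<bar>b j\<bar> powr p) powr (1/p)"
proof -
  define SA where "SA = (\<Sum>j\<in>I. \<bar>a j\<bar> powr p)"
  define SB where "SB = (\<Sum>j\<in>I. \<bar>b j\<bar> powr p)"
  define A where "A = SA powr (1/p)"
  define B where "B = SB powr (1/p)"
  have SA0: "SA \<ge> 0" "SB \<ge> 0" unfolding SA_def SB_def by (auto intro: sum_nonneg)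
  have Ap: "A powr p = SA" using SA0 assms unfolding A_def by (simp add: powr_powr)
  have Bp: "B powr p = SB" using SA0 assms unfolding B_def by (simp add: powr_powr)
  show ?thesis
  proof (cases "SA = 0")
    case True
    then have "\<forall>j\<in>I. \<bar>a j\<bar> powr p = 0" using sum_nonneg_eq_0_iff[OF assms(2), of "\<lambda>j. \<bar>a j\<bar> powr p"] SA_def by auto
    then have "\<forall>j\<in>I. a j = 0" by auto
    then have "(\<Sum>j\<in>I. \<bar>a j + b j\<bar> powr p) = SB" unfolding SB_def by (intro sum.cong) auto
    then show ?thesis using True by (simp add: SA_def[symmetric] SB_def[symmetric])
  next
    case SAne: False
    show ?thesis
    proof (cases "SB = 0")
      case True
      then have "\<forall>j\<in>I. \<bar>b j\<bar> powr p = 0" using sum_nonneg_eq_0_iff[OF assms(2), of "\<lambda>j. \<bar>b j\<bar> powr p"] SB_def by auto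
      then have "\<forall>j\<in>I. b j = 0" by auto
      then have "(\<Sum>j\<in>I. \<bar>a j + b j\<bar> powr p) = SA" unfolding SA_def by (intro sum.cong) auto
      then show ?thesis using True by (simp add: SA_def[symmetric] SB_def[symmetric])
    next
      case False
      have A0: "A > 0" using SAne SA0 unfolding A_def by simp
      have B0: "B > 0" using False SA0 unfolding B_def by simp
      define t where "t = B / (A + B)"
      have t: "0 \<le> t" "t \<le> 1" "1 - t = A / (A + B)" using A0 B0 unfolding t_def by (auto simp: field_simps)
      have pt: "\<bar>a j + b j\<bar> powr p \<le> (A + B) powr p * ((1 - t) * (\<bar>a j\<bar> powr p / SA) + t * (\<bar>b j\<bar> powr p / SB))" for j
      proof -
        have "\<bar>a j + b j\<bar> powr p \<le> (\<bar>a j\<bar> + \<bar>b j\<bar>) powr p"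
          using assms by (intro powr_mono2) auto
        also have "\<bar>a j\<bar> + \<bar>b j\<bar> = (A + B) * ((1 - t) * (\<bar>a j\<bar> / A) + t * (\<bar>b j\<bar> / B))"
        proof -
          have AB: "A + B > 0" using A0 B0 by simp
          have "(1 - t) * (\<bar>a j\<bar> / A) = \<bar>a j\<bar> / (A + B)" unfolding t(3) using A0 AB by simp
          moreover have "t * (\<bar>b j\<bar> / B) = \<bar>b j\<bar> / (A + B)" using B0 AB unfolding t_def by (simp add: divide_simps)
          ultimately have "(A + B) * ((1 - t) * (\<bar>a j\<bar> / A) + t * (\<bar>b j\<bar> / B)) = (A + B) * ((\<bar>a j\<bar> + \<bar>b j\<bar>) / (A + B))"
            by (simp only: add_divide_distrib)
          then show ?thesis using AB by simp
        
        qed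
        also have "((A + B) * ((1 - t) * (\<bar>a j\<bar> / A) + t * (\<bar>b j\<bar> / B))) powr p
           = (A + B) powr p * ((1 - t) * (\<bar>a j\<bar> / A) + t * (\<bar>b j\<bar> / B)) powr p"
          using A0 B0 t by (intro powr_mult)
        also have "\<dots> \<le> (A + B) powr p * ((1 - t) * (\<bar>a j\<bar> / A) powr p + t * (\<bar>b j\<bar> / B) powr p)"
          using pw_convex[of p t "\<bar>a j\<bar> / A" "\<bar>b j\<bar> / B"] assms t A0 B0
          by (intro mult_left_mono) auto
        also have "(\<bar>a j\<bar> / A) powr p = \<bar>a j\<bar> powr p / SA" using A0 Ap by (simp add: powr_divide)
        also have "(\<bar>b j\<bar> / B) powr p = \<bar>b j\<bar> powr p / SB" using B0 Bp by (simp add: powr_divide)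
        finally show ?thesis .
      qed
      have "(\<Sum>j\<in>I. \<bar>a j + b j\<bar> powr p) \<le> (\<Sum>j\<in>I. (A + B) powr p * ((1 - t) * (\<bar>a j\<bar> powr p / SA) + t * (\<bar>b j\<bar> powr p / SB)))"
        by (intro sum_mono pt)
      also have "\<dots> = (A + B) powr p * ((1 - t) * (SA / SA) + t * (SB / SB))"
      proof -
        have "(\<Sum>j\<in>I. (A + B) powr p * ((1 - t) * (\<bar>a j\<bar> powr p / SA) + t * (\<bar>b j\<bar> powr p / SB)))
           = (A + B) powr p * ((1 - t) * (\<Sum>j\<in>I. \<bar>a j\<bar> powr p / SA) + t * (\<Sum>j\<in>I. \<bar>b j\<bar> powr p / SB))"
          by (simp only: sum_distrib_left[symmetric] sum.distrib)
        also have "(\<Sum>j\<in>I. \<bar>a j\<bar> powr p / SA) = SA / SA" unfolding SA_def by (rule sum_divide_distrib[symmetric])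
        also have "(\<Sum>j\<in>I. \<bar>b j\<bar> powr p / SB) = SB / SB" unfolding SB_def by (rule sum_divide_distrib[symmetric])
        finally show ?thesis .
      qed
      also have "\<dots> = (A + B) powr p" using SAne False by simp
      finally have "(\<Sum>j\<in>I. \<bar>a j + b j\<bar> powr p) powr (1/p) \<le> ((A + B) powr p) powr (1/p)"
        using assms by (intro powr_mono2) (auto intro: sum_nonneg)
      also have "\<dots> = A + B" using A0 B0 assms by (simp add: powr_powr)
      finally show ?thesis unfolding A_def B_def SA_def SB_def .
    qed
  qed
qed

lemma power_mean_q:
  fixes g :: "'i \<Rightarrow> real" and q :: real
  assumes "finite I" "0 < q" "q \<le> 1" "\<And>i. i \<in> I \<Longrightarrow> g i \<ge> 0"
  shows "(\<Sum>i\<in>I. g i powr q) \<le> real (card I) powr (1 - q/2) * (\<Sum>i\<in>I. g i powr 2) powr (q/2)"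
proof (cases "(\<Sum>i\<in>I. g i powr 2) = 0")
  case True
  then have "\<forall>i\<in>I. g i powr 2 = 0" using sum_nonneg_eq_0_iff[OF assms(1), of "\<lambda>i. g i powr 2"] by auto
  then have "\<forall>i\<in>I. g i = 0" by auto
  then show ?thesis by simp
next
  case False
  define X where "X = (\<Sum>i\<in>I. g i powr 2)"
  have X0: "X > 0" using False X_def by (simp add: order_le_neq_trans sum_nonneg)
  have In: "I \<noteq> {}" using False by auto
  define n where "n = real (card I)"
  have n0: "n > 0" using In assms(1) n_def by (simp add: card_gt_0_iff)
  define c where "c = X / n"
  have c0: "c > 0" using X0 n0 c_def by simp
  define \<alpha> where "\<alpha> = q / 2"
  have \<alpha>: "0 < \<alpha>" "\<alpha> \<le> 1" using assms \<alpha>_def by auto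
  have pt: "g i powr q \<le> c powr \<alpha> * (\<alpha> * (g i powr 2) / c + (1 - \<alpha>))" if "i \<in> I" for i
  proof (cases "g i = 0")
    case True
    then show ?thesis using \<alpha> c0 by simp
  next
    case False
    have gi: "g i > 0" using False assms(4)[OF that] by simp
    have e: "(g i powr 2) powr \<alpha> = g i powr q" unfolding powr_powr \<alpha>_def by simp
    have gc: "g i powr 2 = c * (g i powr 2 / c)" using c0 by simp
    have "g i powr q = (c * (g i powr 2 / c)) powr \<alpha>" using e gc by metis
    also have "\<dots> = c powr \<alpha> * (g i powr 2 / c) powr \<alpha>"
      using c0 gi by (intro powr_mult)
    also have "\<dots> = c powr \<alpha> * ((g i powr 2 / c) powr \<alpha> * 1 powr (1 - \<alpha>))" by simp
    also have "\<dots> \<le> c powr \<alpha> * (\<alpha> * (g i powr 2 / c) + (1 - \<alpha>) * 1)"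
      using Youngs_inequality_0[of \<alpha> "1 - \<alpha>" "g i powr 2 / c" 1] \<alpha> gi c0
      by (intro mult_left_mono) auto
    finally show ?thesis by simp
  qed
  have "(\<Sum>i\<in>I. g i powr q) \<le> (\<Sum>i\<in>I. c powr \<alpha> * (\<alpha> * (g i powr 2) / c + (1 - \<alpha>)))"
    by (intro sum_mono pt)
  also have "\<dots> = c powr \<alpha> * (\<alpha> * X / c + (1 - \<alpha>) * n)"
  proof -
    have "(\<Sum>i\<in>I. c powr \<alpha> * (\<alpha> * (g i powr 2) / c + (1 - \<alpha>)))
        = c powr \<alpha> * ((\<Sum>i\<in>I. \<alpha> * (g i powr 2) / c) + (\<Sum>i\<in>I. (1 - \<alpha>)))"
      by (simp only: sum_distrib_left[symmetric] sum.distrib)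
    also have "(\<Sum>i\<in>I. \<alpha> * (g i powr 2) / c) = \<alpha> * X / c"
      unfolding X_def by (simp only: sum_divide_distrib[symmetric] sum_distrib_left[symmetric])
    also have "(\<Sum>i\<in>I. (1 - \<alpha>)) = (1 - \<alpha>) * n" unfolding n_def by simp
    finally show ?thesis .
  qed
  also have "\<alpha> * X / c + (1 - \<alpha>) * n = n" using c_def n0 X0 c0 by (simp add: field_simps)
  also have "c powr \<alpha> * n = n powr (1 - \<alpha>) * X powr \<alpha>"
  proof -
    have "c powr \<alpha> = X powr \<alpha> / n powr \<alpha>" unfolding c_def using n0 X0 by (simp add: powr_divide)
    moreover have "n powr (1 - \<alpha>) = n / n powr \<alpha>" using n0 by (simp add: powr_diff)
    ultimately show ?thesis by simp
  qed
  finally show ?thesis unfolding n_def X_def \<alpha>_def .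
qed

lemma key_ineq:
  fixes q c D L :: real
  assumes "0 < q" "q \<le> 1" "c > 0" "D \<ge> 0" "D\<^sup>2 \<le> L" "L \<le> c * D powr q"
  shows "L \<le> c powr (2 / (2 - q))"
proof (cases "D = 0")
  case True
  then show ?thesis using assms by simp
next
  case False
  then have D0: "D > 0" using assms by simp
  have "D powr 2 \<le> c * D powr q" using assms D0 by (simp add: powr_numeral)
  then have "D powr 2 / D powr q \<le> c" using D0 by (simp add: divide_le_eq mult.commute)
  then have "D powr (2 - q) \<le> c" using D0 by (simp add: powr_diff)
  then have "(D powr (2 - q)) powr (q / (2 - q)) \<le> c powr (q / (2 - q))"
    using assms D0 by (intro powr_mono2) auto
  moreover have "(D powr (2 - q)) powr (q / (2 - q)) = D powr q"
    using assms by (simp add: powr_powr)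
  ultimately have "D powr q \<le> c powr (q / (2 - q))" by simp
  then have "L \<le> c * c powr (q / (2 - q))" using assms by (smt (verit) mult_left_mono)
  also have "c * c powr (q / (2 - q)) = c powr (1 + q / (2 - q))" using assms by (simp add: powr_add)
  also have "1 + q / (2 - q) = 2 / (2 - q)" using assms by (simp add: field_simps)
  finally show ?thesis .
qed

lemma powr_inv_powr: "(s::real) \<ge> 0 \<Longrightarrow> (q::real) > 0 \<Longrightarrow> (s powr (1/q)) powr q = s"
  by (simp add: powr_powr)

lemma gnorm_nonneg: "gnorm p I x \<ge> 0"
  unfolding gnorm_def by simp

lemma mixnorm_nonneg: "mixnorm p q G x J \<ge> 0"
  unfolding mixnorm_def by simp

lemma mixnorm_powr: "(q::real) > 0 \<Longrightarrow> mixnorm p q G x J powr q = (\<Sum>i\<in>J. gnorm p (G i) x powr q)"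
  unfolding mixnorm_def by (rule powr_inv_powr) (auto intro: sum_nonneg)

lemma gnorm_minkowski:
  fixes u v :: "real ^ 'n::finite"
  assumes "1 \<le> p"
  shows "gnorm p I (u - v) \<le> gnorm p I u + gnorm p I v"
proof -
  have "gnorm p I (u - v) = (\<Sum>j\<in>I. \<bar>u $ j + (- (v $ j))\<bar> powr p) powr (1/p)"
    unfolding gnorm_def by simp
  also have "\<dots> \<le> (\<Sum>j\<in>I. \<bar>u $ j\<bar> powr p) powr (1/p) + (\<Sum>j\<in>I. \<bar>- (v $ j)\<bar> powr p) powr (1/p)"
    by (rule minkowski_fin[OF assms finite])
  also have "\<dots> = gnorm p I u + gnorm p I v" unfolding gnorm_def by simp
  finally show ?thesis .
qed

theorem proposition2p2:
  fixes A :: "real ^ 'n ^ 'm" and xbar xstar :: "real ^ 'n"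
    and G :: "nat \<Rightarrow> 'n set" and r :: nat
    and p q lambda :: real and S :: nat and K :: int and Sset T :: "nat set"
  assumes part: "group_partition r G"
    and q: "0 < q" "q \<le> 1" and p: "1 \<le> p" "p \<le> 2"
    and Sset: "Sset = {i \<in> {1..r}. (\<exists>j\<in>G i. xbar $ j \<noteq> 0)}"
    and S: "card Sset = S" "S \<ge> 1"
    and grec: "grec_phi p q G r A S S > 0"
    and K: "2 powr (of_int K - 1) * q \<ge> 1"
    and Kmin: "\<forall>k::int. 2 powr (of_int k - 1) * q \<ge> 1 \<longrightarrow> K \<le> k"
    and lam: "lambda > 0"
    and lev: "(norm (A *v xstar - A *v xbar))\<^sup>2 + lambda * mixnorm p q G xstar {1..r} powr q
              \<le> lambda * mixnorm p q G xbar {1..r} powr q"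
    and T: "is_topN p G r xstar Sset S T"
  shows "((norm (A *v xstar - A *v xbar))\<^sup>2 + lambda * mixnorm p q G xstar ({1..r} - Sset) powr q
           \<le> lambda powr (2 / (2 - q)) * real S powr ((1 - 2 powr (- of_int K)) * (2 / (2 - q)))
             / grec_phi p q G r A S S powr (2 * q / (2 - q)))
         \<and> ((mixnorm p 2 G (xstar - xbar) (Sset \<union> T))\<^sup>2
           \<le> lambda powr (2 / (2 - q)) * real S powr ((1 - 2 powr (- of_int K)) * (2 / (2 - q)))
             / grec_phi p q G r A S S powr (4 / (2 - q)))"
  proof -
  define h where "h = xstar - xbar"
  define D where "D = norm (A *v xstar - A *v xbar)"
  define phi where "phi = grec_phi p q G r A S S"
  define R where "R = {1..r} - Sset"
  define e where "e = 2 / (2 - q)"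
  have e0: "e > 0" using q unfolding e_def by simp
  have SsubR: "Sset \<subseteq> {1..r}" using Sset by auto
  have finS: "finite Sset" using SsubR finite_subset by blast
  have finR: "finite R" unfolding R_def by simp
  have split: "(\<Sum>i\<in>{1..r}. f i) = (\<Sum>i\<in>R. f i) + (\<Sum>i\<in>Sset. f i)" for f :: "nat \<Rightarrow> real"
    unfolding R_def by (rule sum.subset_diff[OF SsubR]) simp
  have xbar0: "xbar $ j = 0" if "i \<in> R" "j \<in> G i" for i j
    using that Sset unfolding R_def by auto
  have gxbarR: "gnorm p (G i) xbar = 0" if "i \<in> R" for i
    unfolding gnorm_def using xbar0[OF that] by simp
  have ghR: "gnorm p (G i) h = gnorm p (G i) xstar" if "i \<in> R" for i
    unfolding gnorm_def h_def using xbar0[OF that] by (intro arg_cong[where f="\<lambda>s. s powr (1/p)"] sum.cong) auto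
  have mink: "gnorm p (G i) xbar powr q \<le> gnorm p (G i) xstar powr q + gnorm p (G i) h powr q" for i
  proof -
    have "xbar = xstar - h" unfolding h_def by simp
    then have "gnorm p (G i) xbar \<le> gnorm p (G i) xstar + gnorm p (G i) h"
      using gnorm_minkowski[OF p(1)] by metis
    then have "gnorm p (G i) xbar powr q \<le> (gnorm p (G i) xstar + gnorm p (G i) h) powr q"
      using q by (intro powr_mono2) (auto simp: gnorm_nonneg)
    also have "\<dots> \<le> gnorm p (G i) xstar powr q + gnorm p (G i) h powr q"
      using q by (intro subadd_powr) (auto simp: gnorm_nonneg)
    finally show ?thesis .
  qed
  have DAh: "D = norm (A *v h)" unfolding D_def h_def by (simp add: matrix_vector_mult_diff_distrib)
  have D0: "D \<ge> 0" unfolding D_def by simp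
  define L where "L = D\<^sup>2 + lambda * mixnorm p q G xstar ({1..r} - Sset) powr q"
  have L_eq: "L = D\<^sup>2 + lambda * (\<Sum>i\<in>R. gnorm p (G i) xstar powr q)"
    unfolding L_def R_def by (simp only: mixnorm_powr[OF q(1)])
  have star: "L \<le> lambda * (\<Sum>i\<in>Sset. gnorm p (G i) h powr q)"
  proof -
    have lev': "D\<^sup>2 + lambda * ((\<Sum>i\<in>R. gnorm p (G i) xstar powr q) + (\<Sum>i\<in>Sset. gnorm p (G i) xstar powr q))
      \<le> lambda * ((\<Sum>i\<in>R. gnorm p (G i) xbar powr q) + (\<Sum>i\<in>Sset. gnorm p (G i) xbar powr q))"
      using lev unfolding D_def mixnorm_powr[OF q(1)] split .
    have "(\<Sum>i\<in>R. gnorm p (G i) xbar powr q) = 0" using gxbarR by simp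
    moreover have "(\<Sum>i\<in>Sset. gnorm p (G i) xbar powr q) \<le> (\<Sum>i\<in>Sset. gnorm p (G i) xstar powr q) + (\<Sum>i\<in>Sset. gnorm p (G i) h powr q)"
      unfolding sum.distrib[symmetric] by (intro sum_mono mink)
    ultimately have "lambda * ((\<Sum>i\<in>R. gnorm p (G i) xbar powr q) + (\<Sum>i\<in>Sset. gnorm p (G i) xbar powr q))
       \<le> lambda * ((\<Sum>i\<in>Sset. gnorm p (G i) xstar powr q) + (\<Sum>i\<in>Sset. gnorm p (G i) h powr q))"
      using lam by (intro mult_left_mono) auto
    with lev' show ?thesis unfolding L_eq by (simp add: algebra_simps)
  qed
  define B0 where "B0 = lambda powr e * real S powr ((1 - 2 powr (- of_int K)) * e)"
  have B0nn: "B0 \<ge> 0" unfolding B0_def by simp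
  have goal_form: "?thesis \<longleftrightarrow> (L \<le> B0 / phi powr (2 * q / (2 - q)) \<and>
      (mixnorm p 2 G h (Sset \<union> T))\<^sup>2 \<le> B0 / phi powr (4 / (2 - q)))"
    unfolding L_def D_def h_def B0_def phi_def e_def by simp
  show ?thesis
  proof (cases "h = 0")
    case True
    then have xs: "xstar = xbar" unfolding h_def by simp
    have "D = 0" unfolding D_def xs by simp
    moreover have "(\<Sum>i\<in>R. gnorm p (G i) xstar powr q) = 0" using gxbarR xs q by simp
    ultimately have "L = 0" unfolding L_eq by simp
    moreover have "mixnorm p 2 G h (Sset \<union> T) = 0"
      unfolding True mixnorm_def gnorm_def by simp
    ultimately show ?thesis unfolding goal_form using B0nn by simp
  next
    case hne: False
    have phi0: "phi > 0" using grec unfolding phi_def .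
    have cone_sum: "(\<Sum>i\<in>R. gnorm p (G i) h powr q) \<le> (\<Sum>i\<in>Sset. gnorm p (G i) h powr q)"
    proof -
      have "(\<Sum>i\<in>R. gnorm p (G i) h powr q) = (\<Sum>i\<in>R. gnorm p (G i) xstar powr q)"
        using ghR by simp
      moreover have "lambda * (\<Sum>i\<in>R. gnorm p (G i) xstar powr q) \<le> lambda * (\<Sum>i\<in>Sset. gnorm p (G i) h powr q)"
        using star L_eq D0 by (smt (verit) zero_le_power2)
      ultimately show ?thesis using lam by simp
    qed
    have cone: "mixnorm p q G h ({1..r} - Sset) \<le> mixnorm p q G h Sset"
      unfolding mixnorm_def R_def[symmetric] using cone_sum q
      by (intro powr_mono2) (auto intro: sum_nonneg)
    have topN: "is_topN p G r h Sset S T"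
      using T ghR unfolding is_topN_def R_def by auto
    define M where "M = mixnorm p 2 G h (Sset \<union> T)"
    have mem: "D / M \<in> {norm (A *v x) / mixnorm p 2 G x (T \<union> J) | x J T.
      x \<noteq> 0 \<and> J \<subseteq> {1..r} \<and> card J \<le> S \<and>
      mixnorm p q G x ({1..r} - J) \<le> mixnorm p q G x J \<and> is_topN p G r x J S T}"
      using hne SsubR S cone topN unfolding DAh M_def by (auto simp: Un_commute)
    have bdd: "bdd_below {norm (A *v x) / mixnorm p 2 G x (T \<union> J) | x J T.
      x \<noteq> 0 \<and> J \<subseteq> {1..r} \<and> card J \<le> S \<and>
      mixnorm p q G x ({1..r} - J) \<le> mixnorm p q G x J \<and> is_topN p G r x J S T}"
      by (rule bdd_belowI[of _ 0]) (auto simp: mixnorm_nonneg)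
    have phiDM: "phi \<le> D / M"
      unfolding phi_def grec_phi_def by (rule cInf_lower[OF mem bdd])
    have M0: "M \<ge> 0" unfolding M_def by (rule mixnorm_nonneg)
    have Mpos: "M > 0"
    proof (rule ccontr)
      assume "\<not> M > 0"
      then have "M = 0" using M0 by simp
      then show False using phiDM phi0 by simp
    qed
    have MD: "M \<le> D / phi" using phiDM phi0 Mpos by (simp add: field_simps)
    have Mq: "M powr q = (\<Sum>i\<in>Sset \<union> T. gnorm p (G i) h powr 2) powr (q / 2)"
      unfolding M_def mixnorm_def by (simp add: powr_powr)
    have finT: "finite T" using T unfolding is_topN_def by (meson finite_atLeastAtMost finite_Diff finite_subset)
    have pm: "(\<Sum>i\<in>Sset. gnorm p (G i) h powr q) \<le> real S powr (1 - q/2) * M powr q"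
    proof -
      have "(\<Sum>i\<in>Sset. gnorm p (G i) h powr q) \<le> real (card Sset) powr (1 - q/2) * (\<Sum>i\<in>Sset. gnorm p (G i) h powr 2) powr (q/2)"
        using finS q by (intro power_mean_q) (auto simp: gnorm_nonneg)
      also have "\<dots> \<le> real S powr (1 - q/2) * (\<Sum>i\<in>Sset \<union> T. gnorm p (G i) h powr 2) powr (q/2)"
        unfolding S(1) using S q finS finT
        by (intro mult_left_mono powr_mono2 sum_mono2) (auto intro: sum_nonneg simp: gnorm_nonneg)
      finally show ?thesis unfolding Mq .
    qed
    define c where "c = lambda * real S powr (1 - q/2) / phi powr q"
    have c0: "c > 0" unfolding c_def using lam S phi0 by simp
    have "M powr q \<le> (D / phi) powr q" using MD Mpos q by (intro powr_mono2) auto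
    also have "\<dots> = D powr q / phi powr q" using D0 phi0 by (simp add: powr_divide)
    finally have Mq2: "M powr q \<le> D powr q / phi powr q" .
    have LcD: "L \<le> c * D powr q"
    proof -
      have "L \<le> lambda * (real S powr (1 - q/2) * M powr q)"
        using star pm lam by (smt (verit) mult_left_mono)
      also have "\<dots> \<le> lambda * (real S powr (1 - q/2) * (D powr q / phi powr q))"
        using Mq2 lam by (intro mult_left_mono) auto
      also have "\<dots> = c * D powr q" unfolding c_def by simp
      finally show ?thesis .
    qed
    have DL: "D\<^sup>2 \<le> L" unfolding L_eq using lam by (auto intro!: mult_nonneg_nonneg sum_nonneg)
    have Lc: "L \<le> c powr e" unfolding e_def by (rule key_ineq[OF q c0 D0 DL LcD])
    have Kq: "2 powr (- of_int K) \<le> q / 2"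
    proof -
      have a: "(2::real) powr (- of_int K) * 2 powr (of_int K - 1) = 2 powr (- of_int K + (of_int K - 1))"
        by (rule powr_add[symmetric])
      have b: "(- of_int K + (of_int K - 1)) = (-1::real)" by simp
      have "2 powr (- of_int K) * (2 powr (of_int K - 1) * q) = (2 powr (- of_int K) * 2 powr (of_int K - 1)) * q"
        by (simp only: mult.assoc)
      also have "\<dots> = q / 2" unfolding a b by (simp add: powr_minus_divide)
      finally have eq: "2 powr (- of_int K) * (2 powr (of_int K - 1) * q) = q / 2" .
      have "2 powr (- of_int K) \<le> 2 powr (- of_int K) * (2 powr (of_int K - 1) * q)"
        using K by (simp add: mult_le_cancel_left1)
      then show ?thesis using eq by simp
    qed
    have exp1: "1 \<le> (1 - 2 powr (- of_int K)) * e"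
    proof -
      have "1 = (1 - q/2) * e" using q unfolding e_def by (simp add: field_simps)
      also have "\<dots> \<le> (1 - 2 powr (- of_int K)) * e" using Kq e0 by (intro mult_right_mono) auto
      finally show ?thesis .
    qed
    have ce: "c powr e = lambda powr e * real S powr ((1 - q/2) * e) / phi powr (q * e)"
      unfolding c_def using lam S phi0 by (simp add: powr_divide powr_mult powr_powr)
    have Se: "(1 - q/2) * e = 1" using q unfolding e_def by (simp add: field_simps)
    have qe: "q * e = 2 * q / (2 - q)" unfolding e_def by simp
    have "real S powr ((1 - q/2) * e) \<le> real S powr ((1 - 2 powr (- of_int K)) * e)"
      unfolding Se using S exp1 by (intro powr_mono) auto
    then have ceB: "c powr e \<le> B0 / phi powr (2 * q / (2 - q))"
      unfolding ce B0_def qe using lam phi0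
      by (intro divide_right_mono mult_left_mono) auto
    have part1: "L \<le> B0 / phi powr (2 * q / (2 - q))" using Lc ceB by simp
    have "M\<^sup>2 \<le> (D / phi)\<^sup>2" using MD Mpos by (intro power_mono) auto
    also have "\<dots> = D\<^sup>2 / phi\<^sup>2" by (simp add: power_divide)
    also have "\<dots> \<le> (B0 / phi powr (2 * q / (2 - q))) / phi\<^sup>2"
      using DL part1 phi0 by (intro divide_right_mono) auto
    also have "\<dots> = B0 / phi powr (4 / (2 - q))"
    proof -
      have "phi powr (4 / (2 - q)) = phi powr (2 * q / (2 - q)) * phi powr 2"
        unfolding powr_add[symmetric] using q by (simp add: field_simps)
      then show ?thesis using phi0 by simp
    qed
    finally have part2: "M\<^sup>2 \<le> B0 / phi powr (4 / (2 - q))" .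
    show ?thesis unfolding goal_form using part1 part2 M_def by simp
  qed
qed

end
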